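(* Let $k\ge2$ and $a_1,\dots,a_k\ge1$ be integers. Then $$\iota(\mathsf{K}_{a_1,\dots,a_k})=\begin{cases}1+\left(\sum_{i=1}^k\frac{a_i}{a_i-2}\right)^{-1}, & \text{if no } a_i=2,\\ 1, & \text{if some } a_i=2,\end{cases}$$ where $\iota(\mathsf{K}_{a_1,\dots,a_k})=\infty$ when no $a_i=2$ and $\sum_{i=1}^k\frac{a_i}{a_i-2}=0$. In particular, for $k\ge5$, $\iota(\mathsf{K}_{1,1,k})=-\frac{2}{k-4}$.
   Context: For a connected graph $G$ on vertices $v_1,\dots,v_n$, its distance matrix is $D=(d(v_i,v_j))_{i,j=1}^n$, where $d$ is the shortest-path distance; $\vec 1$ denotes the all-ones vector. $G$ is distance exceptional if $D\vec x=\vec 1$ has no solution. A curvature potential is a vector $\vec x$ with $D\vec x=\vec 1$. Curvature index $\iota(G)\in\mathbb{R}\cup\{\infty\}$: if $G$ is distance exceptional or has a curvature potential $\vec x$ with $\vec 1^\top\vec x\neq0$, then $\iota(G)$ is the unique real number with $\{D\vec x:\vec 1^\top\vec x=1\}\cap\mathbb{R}\vec 1=\{\iota(G)\vec 1\}$; otherwise $\iota(G)=\infty$. $\mathsf{K}_{a_1,\dots,a_k}$ is the complete multipartite graph with parts of sizes $a_1,\dots,a_k$. *)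

theory Defs
  imports Complex_Main "HOL-Library.Extended_Real"
begin

definition gdist :: "'v set \<Rightarrow> ('v \<Rightarrow> 'v \<Rightarrow> bool) \<Rightarrow> 'v \<Rightarrow> 'v \<Rightarrow> nat" where
  "gdist V E u v = (LEAST n. \<exists>p :: nat \<Rightarrow> 'v. p 0 = u \<and> p n = v \<and>
       (\<forall>m\<le>n. p m \<in> V) \<and> (\<forall>m<n. E (p m) (p (Suc m))))"

definition dist_matrix :: "'v set \<Rightarrow> ('v \<Rightarrow> 'v \<Rightarrow> bool) \<Rightarrow> 'v \<Rightarrow> 'v \<Rightarrow> real" where
  "dist_matrix V E u v = real (gdist V E u v)"

definition distance_exceptional :: "'v set \<Rightarrow> ('v \<Rightarrow> 'v \<Rightarrow> real) \<Rightarrow> bool" where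
  "distance_exceptional V D \<longleftrightarrow>
     \<not> (\<exists>x :: 'v \<Rightarrow> real. \<forall>i\<in>V. (\<Sum>j\<in>V. D i j * x j) = 1)"

definition curvature_potential :: "'v set \<Rightarrow> ('v \<Rightarrow> 'v \<Rightarrow> real) \<Rightarrow> ('v \<Rightarrow> real) \<Rightarrow> bool" where
  "curvature_potential V D x \<longleftrightarrow> (\<forall>i\<in>V. (\<Sum>j\<in>V. D i j * x j) = 1)"

definition curvature_index :: "'v set \<Rightarrow> ('v \<Rightarrow> 'v \<Rightarrow> real) \<Rightarrow> ereal" where
  "curvature_index V D =
     (if distance_exceptional V D \<or>
         (\<exists>x. curvature_potential V D x \<and> (\<Sum>j\<in>V. x j) \<noteq> 0)
      then ereal (THE t. {c. \<exists>x :: 'v \<Rightarrow> real. (\<Sum>j\<in>V. x j) = 1 \<and>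
                              (\<forall>i\<in>V. (\<Sum>j\<in>V. D i j * x j) = c)} = {t})
      else \<infinity>)"

text \<open>Complete multipartite graph K_{a_0,...,a_{k-1}}: vertices (i,j) with i<k, j<a i;
  two vertices adjacent iff they lie in different parts.\<close>
definition mp_vertices :: "nat \<Rightarrow> (nat \<Rightarrow> nat) \<Rightarrow> (nat \<times> nat) set" where
  "mp_vertices k a = {(i, j). i < k \<and> j < a i}"

definition mp_adj :: "nat \<times> nat \<Rightarrow> nat \<times> nat \<Rightarrow> bool" where
  "mp_adj u v \<longleftrightarrow> fst u \<noteq> fst v"

definition iota_mp :: "nat \<Rightarrow> (nat \<Rightarrow> nat) \<Rightarrow> ereal" where
  "iota_mp k a = curvature_index (mp_vertices k a) (dist_matrix (mp_vertices k a) mp_adj)"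

end

theory Submission imports Defs begin

lemma idx_single:
  assumes C: "{c. \<exists>x :: 'v \<Rightarrow> real. (\<Sum>j\<in>V. x j) = 1 \<and> (\<forall>i\<in>V. (\<Sum>j\<in>V. D i j * x j) = c)} = {t}"
  shows "curvature_index V D = ereal t"
proof -
  have cond: "distance_exceptional V D \<or> (\<exists>x. curvature_potential V D x \<and> (\<Sum>j\<in>V. x j) \<noteq> 0)"
  proof (cases "t = 0")
    case False
    from C obtain x where x1: "(\<Sum>j\<in>V. x j) = 1" and xt: "\<forall>i\<in>V. (\<Sum>j\<in>V. D i j * x j) = t" by blast
    define z where "z = (\<lambda>j. x j / t)"
    have "curvature_potential V D z"
      unfolding curvature_potential_def z_def
    proof
      fix i assume "i \<in> V"
      have "(\<Sum>j\<in>V. D i j * (x j / t)) = (\<Sum>j\<in>V. D i j * x j) / t"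
        by (simp add: sum_divide_distrib)
      also have "\<dots> = 1" using xt \<open>i \<in> V\<close> False by simp
      finally show "(\<Sum>j\<in>V. D i j * (x j / t)) = 1" .
    qed
    moreover have "(\<Sum>j\<in>V. z j) \<noteq> 0" unfolding z_def
      using x1 False by (simp add: sum_divide_distrib[symmetric])
    ultimately show ?thesis by blast
  next
    case True
    show ?thesis
    proof (rule ccontr)
      assume n: "\<not> ?thesis"
      then obtain z where z: "curvature_potential V D z" and z0: "(\<Sum>j\<in>V. z j) = 0"
        unfolding distance_exceptional_def curvature_potential_def by blast
      from C obtain x where x1: "(\<Sum>j\<in>V. x j) = 1" and xt: "\<forall>i\<in>V. (\<Sum>j\<in>V. D i j * x j) = t" by blast
      have "(\<Sum>j\<in>V. x j + z j) = 1" using x1 z0 by (simp add: sum.distrib)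
      moreover have "\<forall>i\<in>V. (\<Sum>j\<in>V. D i j * (x j + z j)) = 1"
        using xt z True unfolding curvature_potential_def
        by (simp add: distrib_left sum.distrib)
      ultimately have "(1::real) \<in> {c. \<exists>x :: 'v \<Rightarrow> real. (\<Sum>j\<in>V. x j) = 1 \<and> (\<forall>i\<in>V. (\<Sum>j\<in>V. D i j * x j) = c)}"
        by blast
      with C True show False by simp
    qed
  qed
  have "(THE t'. {c. \<exists>x :: 'v \<Rightarrow> real. (\<Sum>j\<in>V. x j) = 1 \<and> (\<forall>i\<in>V. (\<Sum>j\<in>V. D i j * x j) = c)} = {t'}) = t"
    using C by (rule the_equality) (use C in auto)
  then show ?thesis using cond unfolding curvature_index_def by simp
qed

lemma idx_inf:
  assumes C: "{c. \<exists>x :: 'v \<Rightarrow> real. (\<Sum>j\<in>V. x j) = 1 \<and> (\<forall>i\<in>V. (\<Sum>j\<in>V. D i j * x j) = c)} = {}"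
    and z: "curvature_potential V D z"
  shows "curvature_index V D = \<infinity>"
proof -
  have ne: "\<not> distance_exceptional V D" using z
    unfolding distance_exceptional_def curvature_potential_def by blast
  have "\<not> (\<exists>x. curvature_potential V D x \<and> (\<Sum>j\<in>V. x j) \<noteq> 0)"
  proof
    assume "\<exists>x. curvature_potential V D x \<and> (\<Sum>j\<in>V. x j) \<noteq> 0"
    then obtain x where p: "curvature_potential V D x" and s: "(\<Sum>j\<in>V. x j) \<noteq> 0" by blast
    define s0 where "s0 = (\<Sum>j\<in>V. x j)"
    have "(\<Sum>j\<in>V. x j / s0) = 1" using s unfolding s0_def by (simp add: sum_divide_distrib[symmetric])
    moreover have "\<forall>i\<in>V. (\<Sum>j\<in>V. D i j * (x j / s0)) = 1 / s0"
    proof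
      fix i assume "i \<in> V"
      have "(\<Sum>j\<in>V. D i j * (x j / s0)) = (\<Sum>j\<in>V. D i j * x j) / s0"
        by (simp add: sum_divide_distrib)
      then show "(\<Sum>j\<in>V. D i j * (x j / s0)) = 1 / s0" using p \<open>i \<in> V\<close>
        unfolding curvature_potential_def by simp
    qed
    ultimately show False using C by blast
  qed
  with ne show ?thesis unfolding curvature_index_def by simp
qed

lemma mpV: "mp_vertices k a = Sigma {..<k} (\<lambda>i. {..<a i})"
  unfolding mp_vertices_def by auto

lemma gdist_mp:
  assumes k: "k \<ge> 2" and a: "\<forall>i<k. a i \<ge> 1"
    and u: "u \<in> mp_vertices k a" and v: "v \<in> mp_vertices k a"
  shows "gdist (mp_vertices k a) mp_adj u v =
     (if u = v then 0 else if fst u \<noteq> fst v then 1 else 2)"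
proof -
  let ?V = "mp_vertices k a"
  let ?P = "\<lambda>n. \<exists>p :: nat \<Rightarrow> nat \<times> nat. p 0 = u \<and> p n = v \<and>
       (\<forall>m\<le>n. p m \<in> ?V) \<and> (\<forall>m<n. mp_adj (p m) (p (Suc m)))"
  show ?thesis
  proof (cases "u = v")
    case True
    have "?P 0" using True u by (intro exI[of _ "\<lambda>_. u"]) auto
    then have "(LEAST n. ?P n) = 0" by (simp add: Least_eq_0)
    then show ?thesis using True unfolding gdist_def by simp
  next
    case uv: False
    show ?thesis
    proof (cases "fst u \<noteq> fst v")
      case True
      have "?P 1" using True u v
        by (intro exI[of _ "\<lambda>m. if m = 0 then u else v"]) (auto simp: mp_adj_def)
      moreover have "\<And>n. ?P n \<Longrightarrow> 1 \<le> n"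
      proof -
        fix n assume "?P n"
        then obtain p where "p 0 = u" "p n = v" by blast
        then show "1 \<le> n" using uv by (cases n) auto
      qed
      ultimately have "(LEAST n. ?P n) = 1" by (rule Least_equality)
      then show ?thesis using True uv unfolding gdist_def by simp
    next
      case False
      then have fe: "fst u = fst v" by simp
      obtain i' where i': "i' < k" "i' \<noteq> fst u"
      proof (cases "fst u = 0")
        case True then show ?thesis using that[of 1] k by auto
      next
        case False then show ?thesis using that[of 0] k by auto
      qed
      define w where "w = (i', 0::nat)"
      have wV: "w \<in> ?V" using i' a unfolding w_def mp_vertices_def by auto
      have "?P 2" using fe u v wV i'
        by (intro exI[of _ "\<lambda>m. if m = 0 then u else if m = 1 then w else v"])
           (auto simp: mp_adj_def w_def le_Suc_eq less_Suc_eq numeral_2_eq_2)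
      moreover have "\<And>n. ?P n \<Longrightarrow> 2 \<le> n"
      proof -
        fix n assume "?P n"
        then obtain p where p: "p 0 = u" "p n = v" "\<forall>m<n. mp_adj (p m) (p (Suc m))" by blast
        show "2 \<le> n"
        proof (rule ccontr)
          assume "\<not> 2 \<le> n"
          then have "n = 0 \<or> n = 1" by auto
          then show False using p uv fe by (auto simp: mp_adj_def)
        qed
      qed
      ultimately have "(LEAST n. ?P n) = 2" by (rule Least_equality)
      then show ?thesis using False uv unfolding gdist_def by simp
    qed
  qed
qed

lemma dm_mp:
  assumes k: "k \<ge> 2" and a: "\<forall>i<k. a i \<ge> 1"
    and u: "u \<in> mp_vertices k a" and v: "v \<in> mp_vertices k a"
  shows "dist_matrix (mp_vertices k a) mp_adj u v =
     1 + (if fst v = fst u then 1 else 0) - 2 * (if v = u then 1 else 0)"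
  using gdist_mp[OF k a u v] unfolding dist_matrix_def by auto

lemma row_mp:
  assumes k: "k \<ge> 2" and a: "\<forall>i<k. a i \<ge> 1"
    and u: "u \<in> mp_vertices k a"
  shows "(\<Sum>w\<in>mp_vertices k a. dist_matrix (mp_vertices k a) mp_adj u w * x w) =
     (\<Sum>w\<in>mp_vertices k a. x w) + (\<Sum>w\<in>mp_vertices k a. if fst w = fst u then x w else 0) - 2 * x u"
proof -
  let ?V = "mp_vertices k a"
  have fin: "finite ?V" unfolding mpV by auto
  have "(\<Sum>w\<in>?V. dist_matrix ?V mp_adj u w * x w) =
        (\<Sum>w\<in>?V. x w + (if fst w = fst u then x w else 0) - 2 * (if w = u then x w else 0))"
    by (rule sum.cong) (auto simp: dm_mp[OF k a u])
  also have "\<dots> = (\<Sum>w\<in>?V. x w) + (\<Sum>w\<in>?V. if fst w = fst u then x w else 0)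
      - 2 * (\<Sum>w\<in>?V. if w = u then x w else 0)"
    by (simp add: sum.distrib sum_subtractf sum_distrib_left)
  also have "(\<Sum>w\<in>?V. if w = u then x w else 0) = x u"
    using fin u by (simp add: sum.delta')
  finally show ?thesis .
qed

lemma part_sum:
  assumes "i < k"
  shows "(\<Sum>w\<in>mp_vertices k a. if fst w = i then x w else 0) = (\<Sum>j<a i. x (i, j))"
proof -
  have fin: "finite (mp_vertices k a)" unfolding mpV by auto
  have "(\<Sum>w\<in>mp_vertices k a. if fst w = i then x w else 0) =
        (\<Sum>w\<in>{w\<in>mp_vertices k a. fst w = i}. x w)"
    using fin by (simp add: sum.inter_filter)
  also have "{w\<in>mp_vertices k a. fst w = i} = Pair i ` {..<a i}"
    using assms unfolding mp_vertices_def by auto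
  also have "(\<Sum>w\<in>Pair i ` {..<a i}. x w) = (\<Sum>j<a i. x (i, j))"
    by (subst sum.reindex) (auto simp: inj_on_def)
  finally show ?thesis .
qed

lemma tot_sum:
  "(\<Sum>w\<in>mp_vertices k a. x w) = (\<Sum>i<k. \<Sum>j<a i. x (i, j))"
  unfolding mpV by (simp add: sum.Sigma)


lemma row_mp2:
  assumes k: "k \<ge> 2" and a: "\<forall>i<k. a i \<ge> 1"
    and i: "i < k" and j: "j < a i"
  shows "(\<Sum>w\<in>mp_vertices k a. dist_matrix (mp_vertices k a) mp_adj (i, j) w * x w) =
     (\<Sum>i<k. \<Sum>j<a i. x (i, j)) + (\<Sum>j<a i. x (i, j)) - 2 * x (i, j)"
proof -
  have u: "(i, j) \<in> mp_vertices k a" using i j unfolding mp_vertices_def by auto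
  show ?thesis using row_mp[OF k a u, of x] part_sum[OF i, where a=a and x=x] tot_sum[of x k a] by simp
qed

lemma row_y:
  assumes k: "k \<ge> 2" and a: "\<forall>i<k. a i \<ge> 1"
    and u: "u \<in> mp_vertices k a"
  shows "(\<Sum>w\<in>mp_vertices k a. dist_matrix (mp_vertices k a) mp_adj u w * y (fst w)) =
     (\<Sum>i<k. real (a i) * y i) + (real (a (fst u)) - 2) * y (fst u)"
proof -
  obtain i j where ij: "u = (i, j)" "i < k" "j < a i" using u unfolding mp_vertices_def by auto
  show ?thesis using row_mp2[OF k a ij(2,3), of "\<lambda>w. y (fst w)"] ij
    by (simp add: algebra_simps)
qed

lemma C_mp:
  assumes k: "k \<ge> 2" and a: "\<forall>i<k. a i \<ge> 1"
  shows "{c. \<exists>x. (\<Sum>j\<in>mp_vertices k a. x j) = 1 \<and>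
          (\<forall>i\<in>mp_vertices k a. (\<Sum>j\<in>mp_vertices k a. dist_matrix (mp_vertices k a) mp_adj i j * x j) = c)}
       = {c. \<exists>y. (\<forall>i<k. (real (a i) - 2) * y i = c - 1) \<and> (\<Sum>i<k. real (a i) * y i) = 1}"
  (is "?L = ?R")
proof
  show "?L \<subseteq> ?R"
  proof
    fix c assume "c \<in> ?L"
    then obtain x where x1: "(\<Sum>j\<in>mp_vertices k a. x j) = 1"
      and xr: "\<forall>u\<in>mp_vertices k a. (\<Sum>j\<in>mp_vertices k a. dist_matrix (mp_vertices k a) mp_adj u j * x j) = c"
      by blast
    have T: "(\<Sum>i<k. \<Sum>j<a i. x (i, j)) = 1" using x1 tot_sum[of x k a] by simp
    define y where "y i = (1 + (\<Sum>j<a i. x (i, j)) - c) / 2" for i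
    have xy: "x (i, j) = y i" if "i < k" "j < a i" for i j
    proof -
      have "(i, j) \<in> mp_vertices k a" using that unfolding mp_vertices_def by auto
      with xr have "(\<Sum>w\<in>mp_vertices k a. dist_matrix (mp_vertices k a) mp_adj (i, j) w * x w) = c" by blast
      with row_mp2[OF k a that, of x] T show ?thesis unfolding y_def by simp
    qed
    have s: "(\<Sum>j<a i. x (i, j)) = real (a i) * y i" if "i < k" for i
      using xy[OF that] by simp
    have "\<forall>i<k. (real (a i) - 2) * y i = c - 1"
    proof (intro allI impI)
      fix i assume "i < k"
      have "2 * y i = 1 + (\<Sum>j<a i. x (i, j)) - c" unfolding y_def by simp
      then show "(real (a i) - 2) * y i = c - 1" using s[OF \<open>i < k\<close>] by (simp add: algebra_simps)
    qed
    moreover have "(\<Sum>i<k. real (a i) * y i) = 1" using T s by simp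
    ultimately show "c \<in> ?R" by blast
  qed
next
  show "?R \<subseteq> ?L"
  proof
    fix c assume "c \<in> ?R"
    then obtain y where y1: "\<forall>i<k. (real (a i) - 2) * y i = c - 1" and y2: "(\<Sum>i<k. real (a i) * y i) = 1"
      by blast
    have "(\<Sum>j\<in>mp_vertices k a. y (fst j)) = 1" using y2 tot_sum[of "\<lambda>w. y (fst w)" k a] by simp
    moreover have "\<forall>u\<in>mp_vertices k a. (\<Sum>j\<in>mp_vertices k a. dist_matrix (mp_vertices k a) mp_adj u j * y (fst j)) = c"
    proof
      fix u assume u: "u \<in> mp_vertices k a"
      then have "fst u < k" unfolding mp_vertices_def by auto
      then show "(\<Sum>j\<in>mp_vertices k a. dist_matrix (mp_vertices k a) mp_adj u j * y (fst j)) = c"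
        using row_y[OF k a u, of y] y1 y2 by simp
    qed
    ultimately show "c \<in> ?L" by blast
  qed
qed

lemma part1:
  assumes k: "k \<ge> 2" and a: "\<forall>i<k. a i \<ge> 1" and n2: "\<forall>i<k. a i \<noteq> 2"
  shows "iota_mp k a = (if (\<Sum>i<k. real (a i) / (real (a i) - 2)) = 0 then \<infinity>
           else ereal (1 + 1 / (\<Sum>i<k. real (a i) / (real (a i) - 2))))"
proof -
  define S where "S = (\<Sum>i<k. real (a i) / (real (a i) - 2))"
  have nz: "real (a i) - 2 \<noteq> 0" if "i < k" for i using n2 that by auto
  have R: "{c. \<exists>y. (\<forall>i<k. (real (a i) - 2) * y i = c - 1) \<and> (\<Sum>i<k. real (a i) * y i) = 1}
        = {c. (c - 1) * S = 1}" (is "?R = _")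
  proof (intro set_eqI iffI; simp)
    fix c assume "\<exists>y. (\<forall>i<k. (real (a i) - 2) * y i = c - 1) \<and> (\<Sum>i<k. real (a i) * y i) = 1"
    then obtain y where y1: "\<forall>i<k. (real (a i) - 2) * y i = c - 1" and y2: "(\<Sum>i<k. real (a i) * y i) = 1"
      by blast
    have "(\<Sum>i<k. real (a i) * y i) = (\<Sum>i<k. (c - 1) * (real (a i) / (real (a i) - 2)))"
    proof (rule sum.cong)
      fix i assume "i \<in> {..<k}"
      then have "i < k" by simp
      then have "y i = (c - 1) / (real (a i) - 2)" using y1 nz[of i] by (simp add: field_simps)
      then show "real (a i) * y i = (c - 1) * (real (a i) / (real (a i) - 2))" by simp
    qed simp
    then show "(c - 1) * S = 1" using y2 unfolding S_def by (simp add: sum_distrib_left)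
  next
    fix c assume c: "(c - 1) * S = 1"
    define y where "y i = (c - 1) / (real (a i) - 2)" for i
    have "\<forall>i<k. (real (a i) - 2) * y i = c - 1" using nz unfolding y_def by simp
    moreover have "(\<Sum>i<k. real (a i) * y i) = 1"
      using c unfolding y_def S_def by (simp add: sum_distrib_left mult.commute)
    ultimately show "\<exists>y. (\<forall>i<k. (real (a i) - 2) * y i = c - 1) \<and> (\<Sum>i<k. real (a i) * y i) = 1"
      by blast
  qed
  show ?thesis
  proof (cases "S = 0")
    case True
    define y where "y i = 1 / (real (a i) - 2)" for i
    have "curvature_potential (mp_vertices k a) (dist_matrix (mp_vertices k a) mp_adj) (\<lambda>w. y (fst w))"
      unfolding curvature_potential_def
    proof
      fix u assume u: "u \<in> mp_vertices k a"
      then have "fst u < k" unfolding mp_vertices_def by auto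
      moreover have "(\<Sum>i<k. real (a i) * y i) = S" unfolding S_def y_def by simp
      ultimately show "(\<Sum>j\<in>mp_vertices k a. dist_matrix (mp_vertices k a) mp_adj u j * y (fst j)) = 1"
        using row_y[OF k a u, of y] True nz[of "fst u"] unfolding y_def by simp
    qed
    moreover have "{c. (c - 1) * S = 1} = {}" using True by simp
    ultimately have "iota_mp k a = \<infinity>"
      unfolding iota_mp_def by (intro idx_inf) (use trans[OF C_mp[OF k a] R] in auto)
    then show ?thesis using True unfolding S_def by simp
  next
    case False
    have "{c. (c - 1) * S = 1} = {1 + 1 / S}" using False by (auto simp: field_simps)
    then have "iota_mp k a = ereal (1 + 1 / S)"
      unfolding iota_mp_def by (intro idx_single) (rule trans[OF trans[OF C_mp[OF k a] R]])
    then show ?thesis using False unfolding S_def by simp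
  qed
qed

lemma part2:
  assumes k: "k \<ge> 2" and a: "\<forall>i<k. a i \<ge> 1" and i0: "i0 < k" "a i0 = 2"
  shows "iota_mp k a = 1"
proof -
  define y where "y i = (if i = i0 then 1/2 else 0::real)" for i
  have y1: "\<forall>i<k. (real (a i) - 2) * y i = 1 - 1" using i0 unfolding y_def by auto
  have y2: "(\<Sum>i<k. real (a i) * y i) = 1"
    using i0 unfolding y_def by (simp add: if_distrib sum.delta cong: if_cong)
  have "{c. \<exists>y. (\<forall>i<k. (real (a i) - 2) * y i = c - 1) \<and> (\<Sum>i<k. real (a i) * y i) = 1} = {1}"
  proof (intro set_eqI iffI)
    fix c assume "c \<in> {c. \<exists>y. (\<forall>i<k. (real (a i) - 2) * y i = c - 1) \<and> (\<Sum>i<k. real (a i) * y i) = 1}"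
    then show "c \<in> {1}" using i0 by auto
  next
    fix c assume "c \<in> {1::real}"
    then show "c \<in> {c. \<exists>y. (\<forall>i<k. (real (a i) - 2) * y i = c - 1) \<and> (\<Sum>i<k. real (a i) * y i) = 1}"
      using y1 y2 by blast
  qed
  then have "iota_mp k a = ereal 1"
    unfolding iota_mp_def by (intro idx_single) (rule trans[OF C_mp[OF k a]])
  then show ?thesis by (simp add: one_ereal_def)
qed

theorem theorem4p3:
  fixes k :: nat and a :: "nat \<Rightarrow> nat"
  assumes "k \<ge> 2" and "\<forall>i<k. a i \<ge> 1"
  shows "((\<forall>i<k. a i \<noteq> 2) \<longrightarrow>
            (let S = (\<Sum>i<k. real (a i) / (real (a i) - 2)) in
              iota_mp k a = (if S = 0 then \<infinity> else ereal (1 + 1 / S))))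
       \<and> ((\<exists>i<k. a i = 2) \<longrightarrow> iota_mp k a = 1)
       \<and> (\<forall>n::nat. n \<ge> 5 \<longrightarrow>
            iota_mp 3 (\<lambda>i. if i = 0 then 1 else if i = 1 then 1 else n)
              = ereal (- 2 / (real n - 4)))"
proof (intro conjI impI allI)
  assume "\<forall>i<k. a i \<noteq> 2"
  then show "let S = (\<Sum>i<k. real (a i) / (real (a i) - 2)) in
              iota_mp k a = (if S = 0 then \<infinity> else ereal (1 + 1 / S))"
    using part1[OF assms] by simp
next
  assume "\<exists>i<k. a i = 2"
  then show "iota_mp k a = 1" using part2[OF assms] by blast
next
  fix n :: nat assume n: "n \<ge> 5"
  let ?a = "\<lambda>i::nat. if i = 0 then 1 else if i = 1 then 1 else n"
  have a1: "\<forall>i<3. ?a i \<ge> 1" "\<forall>i<3. ?a i \<noteq> 2" using n by auto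
  have S: "(\<Sum>i<3. real (?a i) / (real (?a i) - 2)) = -2 + real n / (real n - 2)"
    by (simp add: numeral_3_eq_3)
  have n2: "real n - 2 \<noteq> 0" "real n - 4 \<noteq> 0" using n by auto
  have Sn: "-2 + real n / (real n - 2) = (4 - real n) / (real n - 2)"
    using n2 by (simp add: field_simps)
  have "(4 - real n) / (real n - 2) \<noteq> 0" using n n2 by auto
  moreover have "1 + 1 / ((4 - real n) / (real n - 2)) = - 2 / (real n - 4)"
    using n2 n by (simp add: field_simps)
  ultimately have ne: "(\<Sum>i<3. real (?a i) / (real (?a i) - 2)) \<noteq> 0"
    and vv: "1 + 1 / (\<Sum>i<3. real (?a i) / (real (?a i) - 2)) = - 2 / (real n - 4)"
    unfolding S Sn by blast+
  have P: "iota_mp 3 ?a = (if (\<Sum>i<3. real (?a i) / (real (?a i) - 2)) = 0 then \<infinity>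
           else ereal (1 + 1 / (\<Sum>i<3. real (?a i) / (real (?a i) - 2))))"
    by (rule part1) (use a1 in auto)
  show "iota_mp 3 ?a = ereal (- 2 / (real n - 4))"
    unfolding P vv[symmetric] using ne by (rule if_not_P)
qed

end
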